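(* Let $a < b$ be real, $\mathcal{P} = [a,b]$, and let $A_1, A_2 \in \mathbb{R}^{n\times n}$, $B \in \mathbb{R}^{n \times n_i}$, $C \in \mathbb{R}^{n_o \times n}$ define the full-order output $y(\mathsf{p}) = C(A_1 + \mathsf{p}A_2)^{-1}B$, and suppose $y(\mathsf{p}) = \Phi_0 + \sum_{i=1}^{n} \frac{\Phi_i}{\mathsf{p} - \nu_i}$ with constant matrices $\Phi_0, \Phi_i \in \mathbb{R}^{n_o\times n_i}$ and pairwise distinct poles $\nu_i \in \mathbb{R} \setminus [a,b]$. For real matrices $\hat{A}_1, \hat{A}_2 \in \mathbb{R}^{r\times r}$, $\hat{B} \in \mathbb{R}^{r \times n_i}$, $\hat{C} \in \mathbb{R}^{n_o \times r}$ define the reduced output $\hat{y}(\mathsf{p}) = \hat{C}(\hat{A}_1 + \mathsf{p}\hat{A}_2)^{-1}\hat{B}$, and suppose $\hat{y}(\mathsf{p}) = \sum_{j=1}^{r} \frac{c_j b_j^{T}}{\mathsf{p} - \lambda_j}$ with $c_j \in \mathbb{R}^{n_o}$, $b_j \in \mathbb{R}^{n_i}$ and pairwise distinct $\lambda_j \in \mathbb{R} \setminus [a,b]$. For $\sigma \in \mathbb{R}\setminus\{a,b\}$ define $f_\sigma\colon \mathbb{R}\setminus\{a,b\} \to \mathbb{R}$ by \[ f_\sigma(\mathsf{p}) = \begin{cases} \left( \ln\left|\frac{\mathsf{p} - b}{\mathsf{p} - a}\right| - \ln\left|\frac{\sigma - b}{\sigma - a}\right| \right) \frac{1}{\mathsf{p}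 - \sigma}, & \mathsf{p} \neq \sigma,\\[1ex] \frac{b - a}{(\sigma - a)(\sigma - b)}, & \mathsf{p} = \sigma, \end{cases} \] and define $Y, \hat{Y}$ on $\mathbb{R}\setminus\{a,b\}$ by \[ Y(\mathsf{p}) = \ln\left|\frac{\mathsf{p} - b}{\mathsf{p} - a}\right| \Phi_0 + \sum_{i=1}^{n} f_{\nu_i}(\mathsf{p}) \Phi_i, \qquad \hat{Y}(\mathsf{p}) = \sum_{j=1}^{r} f_{\lambda_j}(\mathsf{p}) c_j b_j^{T}. \] If $\hat{y}$ is an $\mathcal{L}_2$-optimal structured approximation of $y$, then for $k = 1,\dots,r$: \[ Y(\lambda_k) b_k = \hat{Y}(\lambda_k) b_k, \qquad c_k^{T} Y(\lambda_k) = c_k^{T} \hat{Y}(\lambda_k), \qquad c_k^{T} Y'(\lambda_k) b_k = c_k^{T} \hat{Y}'(\lambda_k) b_k. \]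
   Context: "$\hat{y}$ is an $\mathcal{L}_2$-optimal structured approximation of $y$" means that the real matrices $(\hat{A}_1, \hat{A}_2, \hat{B}, \hat{C})$ minimize $\int_a^b \|y(\mathsf{p}) - \hat{y}(\mathsf{p})\|_F^2 \, d\mathsf{p}$ over all reduced models of the form $\hat{C}(\hat{A}_1 + \mathsf{p}\hat{A}_2)^{-1}\hat{B}$ of fixed order $r$. The pole-residue form of $\hat{y}$ arises when $\hat{A}_2$ is invertible and $\hat{A}_2^{-1}\hat{A}_1$ has $r$ distinct real eigenvalues (the poles being the $\lambda_j$). $\|\cdot\|_F$ is the Frobenius norm; $Y'$ and $\hat{Y}'$ denote derivatives with respect to $\mathsf{p}$ (both functions are continuously differentiable). *)

theory Defs
  imports "HOL-Analysis.Analysis"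
begin

definition pout :: "real^'n^'n \<Rightarrow> real^'n^'n \<Rightarrow> real^'ni^'n \<Rightarrow> real^'n^'no
                     \<Rightarrow> real \<Rightarrow> real^'ni^'no" where
  "pout A1 A2 B C p = C ** matrix_inv (A1 + p *\<^sub>R A2) ** B"

definition frob_norm :: "real^'m^'k \<Rightarrow> real" where
  "frob_norm M = sqrt (\<Sum>i\<in>UNIV. \<Sum>j\<in>UNIV. (M $ i $ j)^2)"

definition L2_err :: "real \<Rightarrow> real \<Rightarrow> (real \<Rightarrow> real^'m^'k) \<Rightarrow> (real \<Rightarrow> real^'m^'k) \<Rightarrow> real" where
  "L2_err a b y yh = integral {a..b} (\<lambda>p. (frob_norm (y p - yh p))^2)"

definition L2_optimal ::
  "real \<Rightarrow> real \<Rightarrow> (real \<Rightarrow> real^'ni^'no)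
   \<Rightarrow> real^'r^'r \<Rightarrow> real^'r^'r \<Rightarrow> real^'ni^'r \<Rightarrow> real^'r^'no \<Rightarrow> bool" where
  "L2_optimal a b y Ah1 Ah2 Bh Ch \<longleftrightarrow>
     (\<forall>p\<in>{a..b}. invertible (Ah1 + p *\<^sub>R Ah2)) \<and>
     (\<forall>(A1'::real^'r^'r) (A2'::real^'r^'r) B' C'.
        (\<forall>p\<in>{a..b}. invertible (A1' + p *\<^sub>R A2')) \<longrightarrow>
        L2_err a b y (pout Ah1 Ah2 Bh Ch) \<le> L2_err a b y (pout A1' A2' B' C'))"

definition outer :: "real^'k \<Rightarrow> real^'m \<Rightarrow> real^'m^'k" where
  "outer c v = (\<chi> i j. c $ i * v $ j)"

definition fsig :: "real \<Rightarrow> real \<Rightarrow> real \<Rightarrow> real \<Rightarrow> real" where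
  "fsig a b \<sigma> p =
     (if p \<noteq> \<sigma> then (ln \<bar>(p - b) / (p - a)\<bar> - ln \<bar>(\<sigma> - b) / (\<sigma> - a)\<bar>) * (1 / (p - \<sigma>))
      else (b - a) / ((\<sigma> - a) * (\<sigma> - b)))"

end

theory Submission
  imports Defs
begin


lemma frob_norm_eq: "frob_norm (M::real^'m^'k) = norm M"
  unfolding frob_norm_def norm_vec_def L2_set_def
  by (simp add: real_sqrt_pow2 sum_nonneg power2_eq_square)

lemma matrix_inv_eq:
  fixes A X :: "real^'n^'n"
  assumes "A ** X = mat 1" "X ** A = mat 1"
  shows "matrix_inv A = X"
proof -
  have "\<exists>A'. A ** A' = mat 1 \<and> A' ** A = mat 1" using assms by blast
  then have h: "A ** matrix_inv A = mat 1 \<and> matrix_inv A ** A = mat 1"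
    unfolding matrix_inv_def by (rule someI_ex)
  have "matrix_inv A = matrix_inv A ** (A ** X)" using assms by (simp add: matrix_mul_rid)
  also have "\<dots> = (matrix_inv A ** A) ** X" by (simp add: matrix_mul_assoc)
  also have "\<dots> = X" using h by (simp add: matrix_mul_lid)
  finally show ?thesis .
qed

definition Ssum :: "('r::finite \<Rightarrow> real^'no) \<Rightarrow> ('r \<Rightarrow> real^'ni) \<Rightarrow> ('r \<Rightarrow> real) \<Rightarrow> real \<Rightarrow> real^'ni^'no" where
  "Ssum c bv lam q = (\<Sum>j\<in>UNIV. (1 / (q - lam j)) *\<^sub>R outer (c j) (bv j))"

definition dA :: "('r::finite \<Rightarrow> real) \<Rightarrow> real^'r^'r" where
  "dA lam = (\<chi> i j. if i = j then - lam i else 0)"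
definition dB :: "('r::finite \<Rightarrow> real^'ni) \<Rightarrow> real^'ni^'r" where
  "dB bv = (\<chi> i. bv i)"
definition dC :: "('r::finite \<Rightarrow> real^'no) \<Rightarrow> real^'r^'no" where
  "dC c = (\<chi> i j. c j $ i)"

lemma diag_model:
  fixes lam :: "'r::finite \<Rightarrow> real"
  assumes "\<forall>j. p \<noteq> lam j"
  shows "invertible (dA lam + p *\<^sub>R mat 1)"
    and "pout (dA lam) (mat 1) (dB bv) (dC c) p = Ssum c bv lam p"
proof -
  define D :: "real^'r^'r" where "D = (\<chi> i j. if i = j then 1 / (p - lam i) else 0)"
  have X: "dA lam + p *\<^sub>R mat 1 = (\<chi> i j. if i = j then p - lam i else 0)"
    by (simp add: dA_def mat_def vec_eq_iff)
  have nz: "\<And>i. p - lam i \<noteq> 0" using assms by auto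
  have 1: "(dA lam + p *\<^sub>R mat 1) ** D = mat 1"
    unfolding X D_def by (simp add: matrix_matrix_mult_def mat_def vec_eq_iff if_distrib[of "\<lambda>x. x * _"] nz assms cong: if_cong)
  have 2: "D ** (dA lam + p *\<^sub>R mat 1) = mat 1"
    unfolding X D_def by (simp add: matrix_matrix_mult_def mat_def vec_eq_iff if_distrib[of "\<lambda>x. x * _"] nz assms cong: if_cong)
  show "invertible (dA lam + p *\<^sub>R mat 1)" unfolding invertible_def using 1 2 by blast
  have inv: "matrix_inv (dA lam + p *\<^sub>R mat 1) = D" by (rule matrix_inv_eq[OF 1 2])
  show "pout (dA lam) (mat 1) (dB bv) (dC c) p = Ssum c bv lam p"
    unfolding pout_def inv
    by (simp add: D_def dB_def dC_def Ssum_def outer_def matrix_matrix_mult_def vec_eq_iff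
        if_distrib[of "\<lambda>x. _ * x"] cong: if_cong)
qed



lemma out_cases: "(p::real) \<notin> {a..b} \<Longrightarrow> p < a \<or> b < p" by auto

lemma int_inv:
  fixes a b p :: real
  assumes ab: "a < b" and p: "p \<notin> {a..b}"
  shows "((\<lambda>q. 1 / (q - p)) has_integral ln \<bar>(p - b) / (p - a)\<bar>) {a..b}"
proof (cases "p < a")
  case True
  have "((\<lambda>q. 1 / (q - p)) has_integral (ln (b - p) - ln (a - p))) {a..b}"
  proof (rule fundamental_theorem_of_calculus)
    fix x assume "x \<in> {a..b}"
    then have "x - p > 0" using True by auto
    then show "((\<lambda>q. ln (q - p)) has_vector_derivative 1 / (x - p)) (at x within {a..b})"
      unfolding has_real_derivative_iff_has_vector_derivative[symmetric]
      by (auto intro!: derivative_eq_intros)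
  qed (use ab in auto)
  moreover have "ln (b - p) - ln (a - p) = ln \<bar>(p - b) / (p - a)\<bar>"
  proof -
    have "\<bar>(p - b) / (p - a)\<bar> = (b - p) / (a - p)" using True ab by (simp add: abs_div)
    then show ?thesis using True ab by (simp add: ln_div)
  qed
  ultimately show ?thesis by simp
next
  case False
  then have bp: "b < p" using p by auto
  have "((\<lambda>q. 1 / (q - p)) has_integral (ln (p - b) - ln (p - a))) {a..b}"
  proof (rule fundamental_theorem_of_calculus)
    fix x assume "x \<in> {a..b}"
    then have "p - x > 0" using bp by auto
    then show "((\<lambda>q. ln (p - q)) has_vector_derivative 1 / (x - p)) (at x within {a..b})"
      unfolding has_real_derivative_iff_has_vector_derivative[symmetric]
      by (auto intro!: derivative_eq_intros simp: field_simps)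
  qed (use ab in auto)
  moreover have "ln (p - b) - ln (p - a) = ln \<bar>(p - b) / (p - a)\<bar>"
  proof -
    have "\<bar>(p - b) / (p - a)\<bar> = (p - b) / (p - a)" using bp ab by (simp add: abs_div)
    then show ?thesis using bp ab by (simp add: ln_div)
  qed
  ultimately show ?thesis by simp
qed

lemma int_inv2:
  fixes a b p :: real
  assumes ab: "a < b" and p: "p \<notin> {a..b}"
  shows "((\<lambda>q. 1 / (q - p) * (1 / (q - p))) has_integral (b - a) / ((p - a) * (p - b))) {a..b}"
proof -
  have "((\<lambda>q. 1 / (q - p) * (1 / (q - p))) has_integral ((- 1 / (b - p)) - (- 1 / (a - p)))) {a..b}"
  proof (rule fundamental_theorem_of_calculus)
    fix x assume "x \<in> {a..b}"
    then have "x - p \<noteq> 0" using p by auto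
    then show "((\<lambda>q. - 1 / (q - p)) has_vector_derivative 1 / (x - p) * (1 / (x - p))) (at x within {a..b})"
      unfolding has_real_derivative_iff_has_vector_derivative[symmetric]
      by (auto intro!: derivative_eq_intros simp: field_simps power2_eq_square)
  qed (use ab in auto)
  moreover have "(- 1 / (b - p)) - (- 1 / (a - p)) = (b - a) / ((p - a) * (p - b))"
  proof -
    have "a - p \<noteq> 0" "b - p \<noteq> 0" "p - a \<noteq> 0" "p - b \<noteq> 0" using p ab by auto
    then show ?thesis by (simp add: field_simps)
  qed
  ultimately show ?thesis by simp
qed

lemma int_fsig:
  fixes a b p \<sigma> :: real
  assumes ab: "a < b" and p: "p \<notin> {a..b}" and s: "\<sigma> \<notin> {a..b}"
  shows "((\<lambda>q. 1 / (q - p) * (1 / (q - \<sigma>))) has_integral fsig a b \<sigma> p) {a..b}"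
proof (cases "p = \<sigma>")
  case True
  then show ?thesis using int_inv2[OF ab p] by (simp add: fsig_def)
next
  case False
  have "((\<lambda>q. (1 / (p - \<sigma>)) * (1 / (q - p) - 1 / (q - \<sigma>))) has_integral
        (1 / (p - \<sigma>)) * (ln \<bar>(p - b) / (p - a)\<bar> - ln \<bar>(\<sigma> - b) / (\<sigma> - a)\<bar>)) {a..b}"
    by (intro has_integral_mult_right has_integral_diff int_inv ab p s)
  moreover have "fsig a b \<sigma> p = 1 / (p - \<sigma>) * (ln \<bar>(p - b) / (p - a)\<bar> - ln \<bar>(\<sigma> - b) / (\<sigma> - a)\<bar>)"
    using False by (simp add: fsig_def)
  moreover have "\<And>q. q \<in> {a..b} \<Longrightarrow> 1 / (p - \<sigma>) * (1 / (q - p) - 1 / (q - \<sigma>)) = 1 / (q - p) * (1 / (q - \<sigma>))"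
  proof -
    fix q assume "q \<in> {a..b}"
    then have "q - p \<noteq> 0" "q - \<sigma> \<noteq> 0" using p s by auto
    then show "1 / (p - \<sigma>) * (1 / (q - p) - 1 / (q - \<sigma>)) = 1 / (q - p) * (1 / (q - \<sigma>))"
      using False by (simp add: field_simps)
  qed
  ultimately show ?thesis using has_integral_eq by (metis (no_types, lifting))
qed

lemma rep_int:
  fixes P0 :: "'v::real_normed_vector" and P :: "'i::finite \<Rightarrow> 'v" and nus :: "'i \<Rightarrow> real"
  assumes ab: "a < b" and p: "p \<notin> {a..b}" and nus: "\<forall>i. nus i \<notin> {a..b}"
  shows "((\<lambda>q. (1 / (q - p)) *\<^sub>R (P0 + (\<Sum>i\<in>UNIV. (1 / (q - nus i)) *\<^sub>R P i))) has_integral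
          (ln \<bar>(p - b) / (p - a)\<bar> *\<^sub>R P0 + (\<Sum>i\<in>UNIV. fsig a b (nus i) p *\<^sub>R P i))) {a..b}"
proof -
  have "((\<lambda>q. (1 / (q - p)) *\<^sub>R P0 + (\<Sum>i\<in>UNIV. (1 / (q - p) * (1 / (q - nus i))) *\<^sub>R P i)) has_integral
          (ln \<bar>(p - b) / (p - a)\<bar> *\<^sub>R P0 + (\<Sum>i\<in>UNIV. fsig a b (nus i) p *\<^sub>R P i))) {a..b}"
    by (intro has_integral_add has_integral_sum has_integral_scaleR_left int_inv int_fsig ab p nus[rule_format]) auto
  then show ?thesis
    by (simp add: scaleR_add_right scaleR_sum_right)
qed



lemma gen_min:
  fixes F F' :: "real \<Rightarrow> real \<Rightarrow> 'v::euclidean_space"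
  assumes U: "open U" "convex U" "x0 \<in> U"
  and le: "\<And>x. x \<in> U \<Longrightarrow> integral {a..b} (\<lambda>q. norm (F x0 q)^2) \<le> integral {a..b} (\<lambda>q. norm (F x q)^2)"
  and der: "\<And>x q. x \<in> U \<Longrightarrow> q \<in> {a..b} \<Longrightarrow> ((\<lambda>x. F x q) has_vector_derivative F' x q) (at x)"
  and cF: "continuous_on (U \<times> {a..b}) (\<lambda>(x,q). F x q)"
  and cF': "continuous_on (U \<times> {a..b}) (\<lambda>(x,q). F' x q)"
  shows "integral {a..b} (\<lambda>q. F x0 q \<bullet> F' x0 q) = 0"
proof -
  define phi where "phi x = integral (cbox a b) (\<lambda>q. F x q \<bullet> F x q)" for x
  have cF1: "continuous_on {a..b} (\<lambda>q. F x q)" if "x \<in> U" for x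
    by (rule continuous_on_compose2[OF cF, where f="\<lambda>q. (x, q)", simplified]) (auto intro!: continuous_intros that)
  have d: "(phi has_field_derivative integral (cbox a b) (\<lambda>q. 2 * (F x0 q \<bullet> F' x0 q))) (at x0 within U)"
    unfolding phi_def
  proof (rule leibniz_rule_field_derivative)
    fix x q assume xq: "x \<in> U" "q \<in> cbox a b"
    then have D: "((\<lambda>x. F x q) has_derivative (\<lambda>t. t *\<^sub>R F' x q)) (at x)"
      using der[of x q] xq unfolding cbox_interval has_vector_derivative_def by blast
    have "((\<lambda>x. F x q \<bullet> F x q) has_derivative (*) (2 * (F x q \<bullet> F' x q))) (at x)"
      by (rule has_derivative_eq_rhs[OF has_derivative_inner[OF D D]]) (auto simp: fun_eq_iff inner_commute algebra_simps)
    then show "((\<lambda>x. F x q \<bullet> F x q) has_field_derivative 2 * (F x q \<bullet> F' x q)) (at x within U)"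
      by (simp add: has_field_derivative_def has_derivative_at_withinI)
  next
    fix x assume "x \<in> U"
    then show "(\<lambda>q. F x q \<bullet> F x q) integrable_on cbox a b"
      using cF1 by (auto intro!: integrable_continuous_interval continuous_intros)
  next
    have "continuous_on (U \<times> cbox a b) (\<lambda>z. 2 * ((\<lambda>(x,q). F x q) z \<bullet> (\<lambda>(x,q). F' x q) z))"
      using cF cF' by (auto intro!: continuous_intros)
    then show "continuous_on (U \<times> cbox a b) (\<lambda>(x, q). 2 * (F x q \<bullet> F' x q))"
      by (simp add: case_prod_beta)
  qed (use U in auto)
  then have d': "(phi has_field_derivative integral (cbox a b) (\<lambda>q. 2 * (F x0 q \<bullet> F' x0 q))) (at x0)"
    using U at_within_open by metis
  obtain e where e: "e > 0" "ball x0 e \<subseteq> U" using U openE by blast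
  have "\<forall>y. \<bar>x0 - y\<bar> < e \<longrightarrow> phi x0 \<le> phi y"
  proof (intro allI impI)
    fix y assume "\<bar>x0 - y\<bar> < e"
    then have "y \<in> U" using e by (auto simp: dist_real_def)
    then show "phi x0 \<le> phi y" using le[of y] by (simp add: phi_def power2_norm_eq_inner)
  qed
  from DERIV_local_min[OF d' e(1) this]
  show ?thesis by simp
qed



lemma deriv_int:
  fixes g :: "real \<Rightarrow> 'v::euclidean_space"
  assumes p: "p \<notin> {a..b}" and g: "continuous_on {a..b} g"
  shows "((\<lambda>p. integral {a..b} (\<lambda>q. (1 / (q - p)) *\<^sub>R g q)) has_vector_derivative
           integral {a..b} (\<lambda>q. (1 / (q - p)^2) *\<^sub>R g q)) (at p)"
proof -
  define U where "U = (if p < a then {..<a} else {b<..})"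
  have U: "open U" "convex U" "p \<in> U" "\<And>x. x \<in> U \<Longrightarrow> x \<notin> {a..b}"
    using p by (auto simp: U_def)
  have gs: "continuous_on (U \<times> {a..b}) (\<lambda>z. g (snd z))"
    by (rule continuous_on_compose2[OF g continuous_on_snd]) auto
  have "((\<lambda>x. integral (cbox a b) (\<lambda>q. (1 / (q - x)) *\<^sub>R g q)) has_vector_derivative
           integral (cbox a b) (\<lambda>q. (1 / (q - p)^2) *\<^sub>R g q)) (at p within U)"
  proof (rule leibniz_rule_vector_derivative)
    fix x t assume xt: "x \<in> U" "t \<in> cbox a b"
    then have "t - x \<noteq> 0" using U(4)[OF xt(1)] by auto
    then have "((\<lambda>x. 1 / (t - x)) has_real_derivative (1 / (t - x)^2)) (at x within U)"
      by (auto intro!: derivative_eq_intros simp: field_simps power2_eq_square)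
    then have "((\<lambda>x. (1 / (t - x)) *\<^sub>R g t) has_vector_derivative (1 / (t - x)) *\<^sub>R 0 + (1 / (t - x)^2) *\<^sub>R g t) (at x within U)"
      by (rule has_vector_derivative_scaleR[OF _ has_vector_derivative_const])
    then show "((\<lambda>x. (1 / (t - x)) *\<^sub>R g t) has_vector_derivative (1 / (t - x)^2) *\<^sub>R g t) (at x within U)"
      by simp
  next
    fix x assume "x \<in> U"
    then have nz: "\<forall>q\<in>{a..b}. q - x \<noteq> 0" using U(4) by auto
    have "continuous_on {a..b} (\<lambda>q. (1 / (q - x)) *\<^sub>R g q)"
      by (intro continuous_on_scaleR continuous_on_divide continuous_intros g nz)
    then show "(\<lambda>q. (1 / (q - x)) *\<^sub>R g q) integrable_on cbox a b"
      by (simp add: integrable_continuous_interval)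
  next
    have nz: "\<forall>z\<in>U \<times> {a..b}. (snd z - fst z)^2 \<noteq> 0"
    proof
      fix z assume "z \<in> U \<times> {a..b}"
      then have "fst z \<in> U" "snd z \<in> {a..b}" by auto
      then have "snd z \<noteq> fst z" using U(4) by metis
      then show "(snd z - fst z)^2 \<noteq> 0" by simp
    qed
    have "continuous_on (U \<times> {a..b}) (\<lambda>z. (1 / (snd z - fst z)^2))"
      by (intro continuous_on_divide continuous_intros nz)
    then have "continuous_on (U \<times> {a..b}) (\<lambda>z. (1 / (snd z - fst z)^2) *\<^sub>R g (snd z))"
      using gs by (intro continuous_on_scaleR)
    then show "continuous_on (U \<times> cbox a b) (\<lambda>(x, t). (1 / (t - x)^2) *\<^sub>R g t)"
      by (simp add: case_prod_beta)
  qed (use U in auto)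
  then show ?thesis unfolding cbox_interval at_within_open[OF U(3) U(1)] .
qed



lemma sum_upd:
  fixes h :: "'a \<Rightarrow> 'r::finite \<Rightarrow> 'b::ab_group_add"
  shows "(\<Sum>j\<in>UNIV. h ((g(k:=x)) j) j) = (\<Sum>j\<in>UNIV. h (g j) j) + (h x k - h (g k) k)"
proof -
  have A: "(\<Sum>j\<in>UNIV. h ((g(k:=x)) j) j) = h x k + (\<Sum>j\<in>UNIV-{k}. h ((g(k:=x)) j) j)"
    by (subst sum.remove[of UNIV k]) auto
  have B: "(\<Sum>j\<in>UNIV. h (g j) j) = h (g k) k + (\<Sum>j\<in>UNIV-{k}. h (g j) j)"
    by (subst sum.remove[of UNIV k]) auto
  have C: "(\<Sum>j\<in>UNIV-{k}. h ((g(k:=x)) j) j) = (\<Sum>j\<in>UNIV-{k}. h (g j) j)"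
    by (rule sum.cong) auto
  show ?thesis using A B C by (simp add: algebra_simps)
qed

lemma outer_add_left: "outer (x + y) v = outer x v + outer y v"
  by (simp add: outer_def vec_eq_iff algebra_simps)
lemma outer_scale_left: "outer (t *\<^sub>R x) v = t *\<^sub>R outer x v"
  by (simp add: outer_def vec_eq_iff algebra_simps)
lemma outer_add_right: "outer u (x + y) = outer u x + outer u y"
  by (simp add: outer_def vec_eq_iff algebra_simps)
lemma outer_scale_right: "outer u (t *\<^sub>R x) = t *\<^sub>R outer u x"
  by (simp add: outer_def vec_eq_iff algebra_simps)

lemma inner_outer1: "(M::real^'m^'k) \<bullet> outer u v = u \<bullet> (M *v v)"
  by (simp add: inner_vec_def outer_def matrix_vector_mult_def sum_distrib_left mult_ac)

lemma inner_outer2: "(M::real^'m^'k) \<bullet> outer u v = (u v* M) \<bullet> v"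
proof -
  have "M \<bullet> outer u v = (\<Sum>i\<in>UNIV. \<Sum>j\<in>UNIV. M $ i $ j * (u $ i * v $ j))"
    by (simp add: inner_vec_def outer_def)
  also have "\<dots> = (\<Sum>j\<in>UNIV. \<Sum>i\<in>UNIV. M $ i $ j * (u $ i * v $ j))"
    by (rule sum.swap)
  also have "\<dots> = (u v* M) \<bullet> v"
    by (simp add: inner_vec_def vector_matrix_mult_def sum_distrib_left sum_distrib_right mult_ac)
  finally show ?thesis .
qed

lemma vm_diff: "(x::real^'k) v* (A - B) = x v* A - x v* B"
  by (simp add: vector_matrix_mult_def vec_eq_iff sum_subtractf algebra_simps)

lemma int_inner:
  fixes f :: "real \<Rightarrow> 'v::euclidean_space"
  shows "f integrable_on S \<Longrightarrow> integral S (\<lambda>x. f x \<bullet> w) = integral S f \<bullet> w"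
  using integral_linear[OF _ bounded_linear_inner_left[of w], of f S] by (simp add: o_def)

lemma cont_snd: "continuous_on S f \<Longrightarrow> continuous_on (U \<times> S) (\<lambda>z. f (snd z))"
  by (rule continuous_on_compose2[OF _ continuous_on_snd]) auto



lemma Ssum_upd_c: "Ssum (c(k:=z)) bv lam q = Ssum c bv lam q + (1 / (q - lam k)) *\<^sub>R (outer z (bv k) - outer (c k) (bv k))"
  unfolding Ssum_def using sum_upd[of "\<lambda>cj j. (1 / (q - lam j)) *\<^sub>R outer cj (bv j)" c k z]
  by (simp add: scaleR_diff_right)

lemma Ssum_upd_b: "Ssum c (bv(k:=z)) lam q = Ssum c bv lam q + (1 / (q - lam k)) *\<^sub>R (outer (c k) z - outer (c k) (bv k))"
  unfolding Ssum_def using sum_upd[of "\<lambda>bj j. (1 / (q - lam j)) *\<^sub>R outer (c j) bj" bv k z]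
  by (simp add: scaleR_diff_right)

lemma Ssum_upd_l: "Ssum c bv (lam(k:=z)) q = Ssum c bv lam q + (1 / (q - z) - 1 / (q - lam k)) *\<^sub>R outer (c k) (bv k)"
  unfolding Ssum_def using sum_upd[of "\<lambda>lj j. (1 / (q - lj)) *\<^sub>R outer (c j) (bv j)" lam k z]
  by (simp add: scaleR_diff_left)

lemma cont_Ssum:
  assumes "\<forall>j. lam j \<notin> {a..b}"
  shows "continuous_on {a..b} (Ssum c bv lam)"
proof -
  have "\<And>j. \<forall>q\<in>{a..b}. q - lam j \<noteq> 0" using assms by auto
  then show ?thesis unfolding Ssum_def
    by (intro continuous_on_sum continuous_on_scaleR continuous_on_divide continuous_intros) auto
qed



theorem theorem5p1:
  fixes a b :: real
    and A1 A2 :: "real^'n^'n" and B :: "real^'ni^'n" and C :: "real^'n^'no"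
    and Phi0 :: "real^'ni^'no" and Phi :: "'n \<Rightarrow> real^'ni^'no" and nu :: "'n \<Rightarrow> real"
    and Ah1 Ah2 :: "real^'r^'r" and Bh :: "real^'ni^'r" and Ch :: "real^'r^'no"
    and c :: "'r \<Rightarrow> real^'no" and bv :: "'r \<Rightarrow> real^'ni" and lam :: "'r \<Rightarrow> real"
    and Y Yh :: "real \<Rightarrow> real^'ni^'no"
  assumes ab: "a < b"
    and full_inv: "\<forall>p\<in>{a..b}. invertible (A1 + p *\<^sub>R A2)"
    and full_pr: "\<forall>p\<in>{a..b}. pout A1 A2 B C p = Phi0 + (\<Sum>i\<in>UNIV. (1 / (p - nu i)) *\<^sub>R Phi i)"
    and nu_dist: "inj nu" and nu_out: "\<forall>i. nu i \<notin> {a..b}"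
    and red_pr: "\<forall>p\<in>{a..b}. pout Ah1 Ah2 Bh Ch p = (\<Sum>j\<in>UNIV. (1 / (p - lam j)) *\<^sub>R outer (c j) (bv j))"
    and lam_dist: "inj lam" and lam_out: "\<forall>j. lam j \<notin> {a..b}"
    and Y_def: "\<forall>p. p \<noteq> a \<and> p \<noteq> b \<longrightarrow>
        Y p = ln \<bar>(p - b) / (p - a)\<bar> *\<^sub>R Phi0 + (\<Sum>i\<in>UNIV. fsig a b (nu i) p *\<^sub>R Phi i)"
    and Yh_def: "\<forall>p. p \<noteq> a \<and> p \<noteq> b \<longrightarrow>
        Yh p = (\<Sum>j\<in>UNIV. fsig a b (lam j) p *\<^sub>R outer (c j) (bv j))"
    and opt: "L2_optimal a b (pout A1 A2 B C) Ah1 Ah2 Bh Ch"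
  shows "\<forall>k. Y (lam k) *v bv k = Yh (lam k) *v bv k
           \<and> c k v* Y (lam k) = c k v* Yh (lam k)
           \<and> c k \<bullet> (vector_derivative Y (at (lam k)) *v bv k)
             = c k \<bullet> (vector_derivative Yh (at (lam k)) *v bv k)"
proof (rule allI)
  fix k
  define yf where "yf q = Phi0 + (\<Sum>i\<in>UNIV. (1 / (q - nu i)) *\<^sub>R Phi i)" for q
  define J where "J c' bv' lam' = integral {a..b} (\<lambda>q. norm (yf q - Ssum c' bv' lam' q)^2)"
    for c' :: "'r \<Rightarrow> real^'no" and bv' :: "'r \<Rightarrow> real^'ni" and lam' :: "'r \<Rightarrow> real"
  define S where "S = Ssum c bv lam"
  have cyf: "continuous_on {a..b} yf"
  proof -
    have "\<And>i. \<forall>q\<in>{a..b}. q - nu i \<noteq> 0" using nu_out by auto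
    then show ?thesis unfolding yf_def
      by (intro continuous_on_add continuous_on_sum continuous_on_scaleR continuous_on_divide continuous_intros) auto
  qed
  have cS: "continuous_on {a..b} S" unfolding S_def by (rule cont_Ssum[OF lam_out])
  have opt': "J c bv lam \<le> J c' bv' lam'" if L: "\<forall>j. lam' j \<notin> {a..b}" for c' bv' lam'
  proof -
    have inv: "\<forall>p\<in>{a..b}. invertible (dA lam' + p *\<^sub>R mat 1)"
      by (intro ballI diag_model(1)) (use L in auto)
    have "L2_err a b (pout A1 A2 B C) (pout Ah1 Ah2 Bh Ch) \<le> L2_err a b (pout A1 A2 B C) (pout (dA lam') (mat 1) (dB bv') (dC c'))"
      using opt inv unfolding L2_optimal_def by blast
    moreover have "L2_err a b (pout A1 A2 B C) (pout Ah1 Ah2 Bh Ch) = J c bv lam"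
      unfolding L2_err_def J_def frob_norm_eq
      by (rule integral_cong) (use full_pr red_pr in \<open>simp add: yf_def Ssum_def\<close>)
    moreover have "L2_err a b (pout A1 A2 B C) (pout (dA lam') (mat 1) (dB bv') (dC c')) = J c' bv' lam'"
      unfolding L2_err_def J_def frob_norm_eq
    proof (rule integral_cong)
      fix p assume p: "p \<in> {a..b}"
      then have pl: "\<forall>j. p \<noteq> lam' j" using L by auto
      have dm: "pout (dA lam') (mat 1) (dB bv') (dC c') p = Ssum c' bv' lam' p" by (rule diag_model(2)[OF pl])
      then show "(norm (pout A1 A2 B C p - pout (dA lam') (mat 1) (dB bv') (dC c') p))\<^sup>2 = (norm (yf p - Ssum c' bv' lam' p))\<^sup>2"
        using full_pr p dm by (simp add: yf_def)
    qed
    ultimately show ?thesis by simp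
  qed
  have repY: "Y p = integral {a..b} (\<lambda>q. (1 / (q - p)) *\<^sub>R yf q)" if p: "p \<notin> {a..b}" for p
  proof -
    have "p \<noteq> a" "p \<noteq> b" using ab p by auto
    then have "Y p = ln \<bar>(p - b) / (p - a)\<bar> *\<^sub>R Phi0 + (\<Sum>i\<in>UNIV. fsig a b (nu i) p *\<^sub>R Phi i)"
      using Y_def by auto
    also have "\<dots> = integral {a..b} (\<lambda>q. (1 / (q - p)) *\<^sub>R yf q)"
      unfolding yf_def by (rule integral_unique[symmetric], rule rep_int[OF ab p nu_out])
    finally show ?thesis .
  qed
  have repYh: "Yh p = integral {a..b} (\<lambda>q. (1 / (q - p)) *\<^sub>R S q)" if p: "p \<notin> {a..b}" for p
  proof -
    have "p \<noteq> a" "p \<noteq> b" using ab p by auto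
    then have "Yh p = ln \<bar>(p - b) / (p - a)\<bar> *\<^sub>R 0 + (\<Sum>j\<in>UNIV. fsig a b (lam j) p *\<^sub>R outer (c j) (bv j))"
      using Yh_def by auto
    also have "\<dots> = integral {a..b} (\<lambda>q. (1 / (q - p)) *\<^sub>R (0 + (\<Sum>j\<in>UNIV. (1 / (q - lam j)) *\<^sub>R outer (c j) (bv j))))"
      by (rule integral_unique[symmetric], rule rep_int[OF ab p lam_out])
    finally show ?thesis by (simp add: S_def Ssum_def)
  qed
  have opnC: "open (- {a..b})" by (simp add: open_Compl)
  have dY: "(Y has_vector_derivative integral {a..b} (\<lambda>q. (1 / (q - p)^2) *\<^sub>R yf q)) (at p)"
    if p: "p \<notin> {a..b}" for p
    by (rule has_vector_derivative_transform_within_open[OF deriv_int[OF p cyf] opnC]) (use p repY in auto)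
  have dYh: "(Yh has_vector_derivative integral {a..b} (\<lambda>q. (1 / (q - p)^2) *\<^sub>R S q)) (at p)"
    if p: "p \<notin> {a..b}" for p
    by (rule has_vector_derivative_transform_within_open[OF deriv_int[OF p cS] opnC]) (use p repYh in auto)

  define l where "l = lam k"
  have lo: "l \<notin> {a..b}" using lam_out by (simp add: l_def)
  have nzl: "\<forall>q\<in>{a..b}. q - l \<noteq> 0" using lo by auto
  have nzl2: "\<forall>q\<in>{a..b}. (q - l)^2 \<noteq> 0" using lo by auto
  define e where "e q = yf q - S q" for q
  have ce: "continuous_on {a..b} e" unfolding e_def by (intro continuous_intros cyf cS)
  have i1: "(\<lambda>q. (1 / (q - l)) *\<^sub>R g q) integrable_on {a..b}" if "continuous_on {a..b} g" for g :: "real \<Rightarrow> real^'ni^'no"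
    by (intro integrable_continuous_interval continuous_on_scaleR continuous_on_divide continuous_intros that nzl)
  have i2: "(\<lambda>q. (1 / (q - l)^2) *\<^sub>R g q) integrable_on {a..b}" if "continuous_on {a..b} g" for g :: "real \<Rightarrow> real^'ni^'no"
    by (intro integrable_continuous_interval continuous_on_scaleR continuous_on_divide continuous_intros that nzl2)
  define E where "E = integral {a..b} (\<lambda>q. (1 / (q - l)) *\<^sub>R e q)"
  have EY: "Y l - Yh l = E"
    unfolding repY[OF lo] repYh[OF lo] E_def e_def scaleR_diff_right
    by (rule integral_diff[symmetric]) (intro i1 cyf cS)+
  define E2 where "E2 = integral {a..b} (\<lambda>q. (1 / (q - l)^2) *\<^sub>R e q)"
  have EY2: "vector_derivative Y (at l) - vector_derivative Yh (at l) = E2"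
    unfolding vector_derivative_at[OF dY[OF lo]] vector_derivative_at[OF dYh[OF lo]] E2_def e_def scaleR_diff_right
    by (rule integral_diff[symmetric]) (intro i2 cyf cS)+
  have JF: "J c bv lam = integral {a..b} (\<lambda>q. norm (e q)^2)" by (simp add: J_def e_def S_def)

  have C1: "E \<bullet> outer u (bv k) = 0" for u
  proof -
    define G where "G q = (1 / (q - l)) *\<^sub>R outer u (bv k)" for q
    have cG: "continuous_on {a..b} G" unfolding G_def
      by (intro continuous_on_scaleR continuous_on_divide continuous_intros nzl)
    have "integral {a..b} (\<lambda>q. (\<lambda>t q. e q - t *\<^sub>R G q) 0 q \<bullet> (\<lambda>t q. - G q) 0 q) = 0"
    proof (rule gen_min[where U=UNIV])
      fix x :: real
      have "J c bv lam \<le> J (c(k := c k + x *\<^sub>R u)) bv lam" by (rule opt'[OF lam_out])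
      moreover have "J (c(k := c k + x *\<^sub>R u)) bv lam = integral {a..b} (\<lambda>q. norm (e q - x *\<^sub>R G q)^2)"
        unfolding J_def Ssum_upd_c e_def G_def S_def l_def
        by (simp add: outer_add_left outer_scale_left algebra_simps)
      ultimately show "integral {a..b} (\<lambda>q. norm (e q - 0 *\<^sub>R G q)^2) \<le> integral {a..b} (\<lambda>q. norm (e q - x *\<^sub>R G q)^2)"
        using JF by simp
    next
      fix x q
      have "((\<lambda>x. e q - x *\<^sub>R G q) has_vector_derivative 0 - (x *\<^sub>R 0 + 1 *\<^sub>R G q)) (at x)"
        by (intro has_vector_derivative_diff has_vector_derivative_const has_vector_derivative_scaleR DERIV_ident)
      then show "((\<lambda>x. e q - x *\<^sub>R G q) has_vector_derivative - G q) (at x)" by simp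
    next
      have "continuous_on (UNIV \<times> {a..b}) (\<lambda>z. e (snd z) - fst z *\<^sub>R G (snd z))"
        by (intro continuous_intros cont_snd ce cG)
      then show "continuous_on (UNIV \<times> {a..b}) (\<lambda>(x, q). e q - x *\<^sub>R G q)" by (simp add: case_prod_beta)
    next
      have "continuous_on (UNIV \<times> {a..b}) (\<lambda>z. - G (snd z))"
        by (intro continuous_intros cont_snd cG)
      then show "continuous_on (UNIV \<times> {a..b}) (\<lambda>(x, q). - G q)" by (simp add: case_prod_beta)
    qed auto
    then have "integral {a..b} (\<lambda>q. ((1 / (q - l)) *\<^sub>R e q) \<bullet> outer u (bv k)) = 0"
      by (simp add: G_def)
    then show ?thesis unfolding E_def by (subst (asm) int_inner) (intro i1 ce)
  qed
  have R1: "Y l *v bv k = Yh l *v bv k"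
  proof -
    have "E \<bullet> outer (E *v bv k) (bv k) = 0" by (rule C1)
    then have "E *v bv k = 0" by (simp add: inner_outer1)
    then show ?thesis using EY by (metis eq_iff_diff_eq_0 matrix_vector_mult_diff_rdistrib)
  qed

  have C2: "E \<bullet> outer (c k) v = 0" for v
  proof -
    define G where "G q = (1 / (q - l)) *\<^sub>R outer (c k) v" for q
    have cG: "continuous_on {a..b} G" unfolding G_def
      by (intro continuous_on_scaleR continuous_on_divide continuous_intros nzl)
    have "integral {a..b} (\<lambda>q. (\<lambda>t q. e q - t *\<^sub>R G q) 0 q \<bullet> (\<lambda>t q. - G q) 0 q) = 0"
    proof (rule gen_min[where U=UNIV])
      fix x :: real
      have "J c bv lam \<le> J c (bv(k := bv k + x *\<^sub>R v)) lam" by (rule opt'[OF lam_out])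
      moreover have "J c (bv(k := bv k + x *\<^sub>R v)) lam = integral {a..b} (\<lambda>q. norm (e q - x *\<^sub>R G q)^2)"
        unfolding J_def Ssum_upd_b e_def G_def S_def l_def
        by (simp add: outer_add_right outer_scale_right algebra_simps)
      ultimately show "integral {a..b} (\<lambda>q. norm (e q - 0 *\<^sub>R G q)^2) \<le> integral {a..b} (\<lambda>q. norm (e q - x *\<^sub>R G q)^2)"
        using JF by simp
    next
      fix x q
      have "((\<lambda>x. e q - x *\<^sub>R G q) has_vector_derivative 0 - (x *\<^sub>R 0 + 1 *\<^sub>R G q)) (at x)"
        by (intro has_vector_derivative_diff has_vector_derivative_const has_vector_derivative_scaleR DERIV_ident)
      then show "((\<lambda>x. e q - x *\<^sub>R G q) has_vector_derivative - G q) (at x)" by simp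
    next
      have "continuous_on (UNIV \<times> {a..b}) (\<lambda>z. e (snd z) - fst z *\<^sub>R G (snd z))"
        by (intro continuous_intros cont_snd ce cG)
      then show "continuous_on (UNIV \<times> {a..b}) (\<lambda>(x, q). e q - x *\<^sub>R G q)" by (simp add: case_prod_beta)
    next
      have "continuous_on (UNIV \<times> {a..b}) (\<lambda>z. - G (snd z))"
        by (intro continuous_intros cont_snd cG)
      then show "continuous_on (UNIV \<times> {a..b}) (\<lambda>(x, q). - G q)" by (simp add: case_prod_beta)
    qed auto
    then have "integral {a..b} (\<lambda>q. ((1 / (q - l)) *\<^sub>R e q) \<bullet> outer (c k) v) = 0"
      by (simp add: G_def)
    then show ?thesis unfolding E_def by (subst (asm) int_inner) (intro i1 ce)
  qed
  have R2: "c k v* Y l = c k v* Yh l"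
  proof -
    have "E \<bullet> outer (c k) (c k v* E) = 0" by (rule C2)
    then have "c k v* E = 0" by (simp add: inner_outer2)
    then show ?thesis using EY by (metis eq_iff_diff_eq_0 vm_diff)
  qed

  define M where "M = outer (c k) (bv k)"
  have C3: "E2 \<bullet> M = 0"
  proof -
    define U where "U = (if l < a then {..<a} else {b<..})"
    have U: "open U" "convex U" "l \<in> U" "\<And>x. x \<in> U \<Longrightarrow> x \<notin> {a..b}"
      using lo by (auto simp: U_def)
    have nzU: "\<forall>z\<in>U \<times> {a..b}. snd z - fst z \<noteq> 0"
    proof
      fix z assume "z \<in> U \<times> {a..b}"
      then have "fst z \<in> U" "snd z \<in> {a..b}" by auto
      then have "snd z \<noteq> fst z" using U(4) by metis
      then show "snd z - fst z \<noteq> 0" by simp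
    qed
    have nzU2: "\<forall>z\<in>U \<times> {a..b}. (snd z - fst z)^2 \<noteq> 0" using nzU by simp
    have nzl': "\<forall>z\<in>U \<times> {a..b}. snd z - l \<noteq> 0" using nzl by auto
    have "integral {a..b} (\<lambda>q. (\<lambda>s q. e q - (1 / (q - s) - 1 / (q - l)) *\<^sub>R M) l q
              \<bullet> (\<lambda>s q. - ((1 / (q - s)^2) *\<^sub>R M)) l q) = 0"
    proof (rule gen_min[where U=U and F="\<lambda>s q. e q - (1 / (q - s) - 1 / (q - l)) *\<^sub>R M" and F'="\<lambda>s q. - ((1 / (q - s)^2) *\<^sub>R M)"])
      fix x assume x: "x \<in> U"
      have "J c bv lam \<le> J c bv (lam(k := x))" by (rule opt') (use lam_out U(4)[OF x] in auto)
      moreover have "J c bv (lam(k := x)) = integral {a..b} (\<lambda>q. norm (e q - (1 / (q - x) - 1 / (q - l)) *\<^sub>R M)^2)"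
        unfolding J_def Ssum_upd_l e_def S_def l_def M_def
        by (simp add: algebra_simps)
      ultimately show "integral {a..b} (\<lambda>q. norm (e q - (1 / (q - l) - 1 / (q - l)) *\<^sub>R M)^2) \<le> integral {a..b} (\<lambda>q. norm (e q - (1 / (q - x) - 1 / (q - l)) *\<^sub>R M)^2)"
        using JF by simp
    next
      fix x q assume x: "x \<in> U" and q: "q \<in> {a..b}"
      then have "q - x \<noteq> 0" using U(4) by auto
      then have h: "((\<lambda>x. 1 / (q - x) - 1 / (q - l)) has_real_derivative (1 / (q - x)^2)) (at x)"
        by (auto intro!: derivative_eq_intros simp: field_simps power2_eq_square)
      have "((\<lambda>x. e q - (1 / (q - x) - 1 / (q - l)) *\<^sub>R M) has_vector_derivative
               0 - ((1 / (q - x) - 1 / (q - l)) *\<^sub>R 0 + (1 / (q - x)^2) *\<^sub>R M)) (at x)"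
        by (intro has_vector_derivative_diff has_vector_derivative_const has_vector_derivative_scaleR h)
      then show "((\<lambda>x. e q - (1 / (q - x) - 1 / (q - l)) *\<^sub>R M) has_vector_derivative - ((1 / (q - x)^2) *\<^sub>R M)) (at x)"
        by simp
    next
      have "continuous_on (U \<times> {a..b}) (\<lambda>z. e (snd z) - (1 / (snd z - fst z) - 1 / (snd z - l)) *\<^sub>R M)"
        by (intro continuous_on_diff continuous_on_scaleR continuous_on_divide continuous_intros cont_snd ce nzU nzl')
      then show "continuous_on (U \<times> {a..b}) (\<lambda>(x, q). e q - (1 / (q - x) - 1 / (q - l)) *\<^sub>R M)"
        by (simp add: case_prod_beta)
    next
      have "continuous_on (U \<times> {a..b}) (\<lambda>z. - ((1 / (snd z - fst z)^2) *\<^sub>R M))"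
        by (intro continuous_on_minus continuous_on_scaleR continuous_on_divide continuous_intros nzU2)
      then show "continuous_on (U \<times> {a..b}) (\<lambda>(x, q). - ((1 / (q - x)^2) *\<^sub>R M))"
        by (simp add: case_prod_beta)
    qed (use U in auto)
    then have "integral {a..b} (\<lambda>q. ((1 / (q - l)^2) *\<^sub>R e q) \<bullet> M) = 0"
      by simp
    then show ?thesis unfolding E2_def by (subst (asm) int_inner) (intro i2 ce)
  qed
  have R3: "c k \<bullet> (vector_derivative Y (at l) *v bv k) = c k \<bullet> (vector_derivative Yh (at l) *v bv k)"
  proof -
    have "c k \<bullet> ((vector_derivative Y (at l) - vector_derivative Yh (at l)) *v bv k) = 0"
      using C3 unfolding EY2 M_def inner_outer1 .
    then show ?thesis by (simp add: matrix_vector_mult_diff_rdistrib inner_diff_right)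
  qed
  show "Y (lam k) *v bv k = Yh (lam k) *v bv k
           \<and> c k v* Y (lam k) = c k v* Yh (lam k)
           \<and> c k \<bullet> (vector_derivative Y (at (lam k)) *v bv k)
             = c k \<bullet> (vector_derivative Yh (at (lam k)) *v bv k)"
    using R1 R2 R3 by (simp add: l_def)
qed

end
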